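(* Let $\Gamma=(V,E)$ be a reflexive, locally finite, $k$-separable graph. Let $X,Y$ be two $k$-fragments of $\Gamma$ such that $|X\cap Y|\ge k$ and $|X|-|X\cap Y|+k\le |Y^{\curlywedge}|$. Then $X\cap Y$ and $X\cup Y$ are $k$-fragments of $\Gamma$.
   Context: A graph is a pair $\Gamma=(V,E)$ with $E\subseteq V\times V$; reflexive means $(x,x)\in E$ for all $x$; locally finite means each $\Gamma(x)=\{y:(x,y)\in E\}$ is finite. For $A\subseteq V$: $\Gamma(A)=\bigcup_{x\in A}\Gamma(x)$, $\partial(A)=\Gamma(A)\setminus A$, $A^{\curlywedge}=V\setminus(A\cup\Gamma(A))$. $\Gamma$ is $k$-separable if some finite $X$ has $|X|\ge k$ and $|V\setminus\Gamma(X)|\ge k$; then $\kappa_k(\Gamma)=\min\{|\partial(X)|: X\text{ finite}, |X|\ge k, |V\setminus\Gamma(X)|\ge k\}$, and a $k$-fragment is a finite $X$ with $|X|\ge k$, $|V\setminus\Gamma(X)|\ge k$ and $|\partial(X)|=\kappa_k(\Gamma)$. (When $V$ is infinite, $|Y^{\curlywedge}|$ is infinite.) *)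

theory Defs
  imports Main
begin

definition graph :: "'a set \<Rightarrow> ('a \<times> 'a) set \<Rightarrow> bool" where
  "graph V E \<longleftrightarrow> E \<subseteq> V \<times> V"

definition reflexive_graph :: "'a set \<Rightarrow> ('a \<times> 'a) set \<Rightarrow> bool" where
  "reflexive_graph V E \<longleftrightarrow> (\<forall>x\<in>V. (x, x) \<in> E)"

definition nbhd :: "('a \<times> 'a) set \<Rightarrow> 'a \<Rightarrow> 'a set" where
  "nbhd E x = {y. (x, y) \<in> E}"

definition locally_finite :: "'a set \<Rightarrow> ('a \<times> 'a) set \<Rightarrow> bool" where
  "locally_finite V E \<longleftrightarrow> (\<forall>x\<in>V. finite (nbhd E x))"

definition nbhd_set :: "('a \<times> 'a) set \<Rightarrow> 'a set \<Rightarrow> 'a set" where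
  "nbhd_set E A = (\<Union>x\<in>A. nbhd E x)"

definition boundary :: "('a \<times> 'a) set \<Rightarrow> 'a set \<Rightarrow> 'a set" where
  "boundary E A = nbhd_set E A - A"

definition exterior :: "'a set \<Rightarrow> ('a \<times> 'a) set \<Rightarrow> 'a set \<Rightarrow> 'a set" where
  "exterior V E A = V - (A \<union> nbhd_set E A)"

text \<open>Cardinality at least n, where infinite sets have infinite cardinality.\<close>
definition card_ge :: "'a set \<Rightarrow> nat \<Rightarrow> bool" where
  "card_ge S n \<longleftrightarrow> infinite S \<or> n \<le> card S"

definition k_admissible :: "'a set \<Rightarrow> ('a \<times> 'a) set \<Rightarrow> nat \<Rightarrow> 'a set \<Rightarrow> bool" where
  "k_admissible V E k X \<longleftrightarrow>
     X \<subseteq> V \<and> finite X \<and> k \<le> card X \<and> card_ge (V - nbhd_set E X) k"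

definition k_separable :: "'a set \<Rightarrow> ('a \<times> 'a) set \<Rightarrow> nat \<Rightarrow> bool" where
  "k_separable V E k \<longleftrightarrow> (\<exists>X. k_admissible V E k X)"

definition kappa :: "'a set \<Rightarrow> ('a \<times> 'a) set \<Rightarrow> nat \<Rightarrow> nat" where
  "kappa V E k = Inf {card (boundary E X) | X. k_admissible V E k X}"

definition k_fragment :: "'a set \<Rightarrow> ('a \<times> 'a) set \<Rightarrow> nat \<Rightarrow> 'a set \<Rightarrow> bool" where
  "k_fragment V E k X \<longleftrightarrow> k_admissible V E k X \<and> card (boundary E X) = kappa V E k"

end

theory Submission
  imports Defs
begin

lemma nbhd_set_Un: "nbhd_set E (A \<union> B) = nbhd_set E A \<union> nbhd_set E B"
  unfolding nbhd_set_def by auto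

lemma nbhd_set_Int: "nbhd_set E (A \<inter> B) \<subseteq> nbhd_set E A \<inter> nbhd_set E B"
  unfolding nbhd_set_def by auto

lemma nbhd_set_mono: "A \<subseteq> B \<Longrightarrow> nbhd_set E A \<subseteq> nbhd_set E B"
  unfolding nbhd_set_def by auto

lemma sub_nbhd: "reflexive_graph V E \<Longrightarrow> A \<subseteq> V \<Longrightarrow> A \<subseteq> nbhd_set E A"
  unfolding reflexive_graph_def nbhd_set_def nbhd_def by auto

lemma nbhd_sub: "graph V E \<Longrightarrow> nbhd_set E A \<subseteq> V"
  unfolding graph_def nbhd_set_def nbhd_def by auto

lemma nbhd_fin: "locally_finite V E \<Longrightarrow> finite A \<Longrightarrow> A \<subseteq> V \<Longrightarrow> finite (nbhd_set E A)"
  unfolding locally_finite_def nbhd_set_def by auto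

lemma bd_card: "reflexive_graph V E \<Longrightarrow> locally_finite V E \<Longrightarrow> finite A \<Longrightarrow> A \<subseteq> V \<Longrightarrow>
  card (boundary E A) + card A = card (nbhd_set E A)"
  unfolding boundary_def
  by (metis card_Diff_subset card_mono le_add_diff_inverse2 nbhd_fin sub_nbhd finite_subset)

lemma kappa_le: "k_admissible V E k Z \<Longrightarrow> kappa V E k \<le> card (boundary E Z)"
  unfolding kappa_def by (rule cInf_lower) auto

lemma card_ge_mono: "card_ge A n \<Longrightarrow> A \<subseteq> B \<Longrightarrow> card_ge B n"
  unfolding card_ge_def by (metis card_mono finite_subset order_trans)

theorem mainTheorem3:
  fixes V :: "'a set" and E :: "('a \<times> 'a) set" and k :: nat and X Y :: "'a set"
  assumes "graph V E"
    and "reflexive_graph V E"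
    and "locally_finite V E"
    and "k_separable V E k"
    and "k_fragment V E k X"
    and "k_fragment V E k Y"
    and "k \<le> card (X \<inter> Y)"
    and "card_ge (exterior V E Y) (card X - card (X \<inter> Y) + k)"
  shows "k_fragment V E k (X \<inter> Y) \<and> k_fragment V E k (X \<union> Y)"
proof -
  note g = assms(1) and r = assms(2) and lf = assms(3)
  let ?N = "nbhd_set E"
  let ?K = "kappa V E k"
  have aX: "k_admissible V E k X" and cX: "card (boundary E X) = ?K"
    using assms(5) unfolding k_fragment_def by auto
  have aY: "k_admissible V E k Y" and cY: "card (boundary E Y) = ?K"
    using assms(6) unfolding k_fragment_def by auto
  have XV: "X \<subseteq> V" "finite X" "k \<le> card X" "card_ge (V - ?N X) k"
    using aX unfolding k_admissible_def by auto
  have YV: "Y \<subseteq> V" "finite Y" "card_ge (V - ?N Y) k"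
    using aY unfolding k_admissible_def by auto
  have fNX: "finite (?N X)" using nbhd_fin[OF lf XV(2,1)] .
  have fNY: "finite (?N Y)" using nbhd_fin[OF lf YV(2,1)] .
  have bX: "card (boundary E X) + card X = card (?N X)" using bd_card[OF r lf XV(2,1)] .
  have bY: "card (boundary E Y) + card Y = card (?N Y)" using bd_card[OF r lf YV(2,1)] .
  have bI: "card (boundary E (X\<inter>Y)) + card (X\<inter>Y) = card (?N (X\<inter>Y))"
    using bd_card[OF r lf] XV YV by auto
  have bU: "card (boundary E (X\<union>Y)) + card (X\<union>Y) = card (?N (X\<union>Y))"
    using bd_card[OF r lf] XV YV by auto
  have NU: "?N (X\<union>Y) = ?N X \<union> ?N Y" by (rule nbhd_set_Un)
  have bU': "card (boundary E (X\<union>Y)) + card (X\<union>Y) = card (?N X \<union> ?N Y)"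
    using bU NU by simp
  have cIU: "card (?N X \<union> ?N Y) + card (?N X \<inter> ?N Y) = card (?N X) + card (?N Y)"
    using card_Un_Int[OF fNX fNY] by simp
  have cNI: "card (?N (X\<inter>Y)) \<le> card (?N X \<inter> ?N Y)"
    using nbhd_set_Int fNX by (metis card_mono finite_Int)
  have cxy: "card (X\<union>Y) + card (X\<inter>Y) = card X + card Y"
    using card_Un_Int[OF XV(2) YV(2)] by simp
  have admI: "k_admissible V E k (X\<inter>Y)"
  proof -
    have "V - ?N X \<subseteq> V - ?N (X\<inter>Y)" using nbhd_set_mono[of "X\<inter>Y" X E] by auto
    thus ?thesis unfolding k_admissible_def using XV assms(7) card_ge_mono[OF XV(4)] by auto
  qed
  have kI: "?K \<le> card (boundary E (X\<inter>Y))" using kappa_le[OF admI] .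
  have leU: "card (boundary E (X\<union>Y)) \<le> ?K"
    using bU' cIU cNI cxy bI kI bX bY cX cY by linarith
  have cD: "card (?N X - ?N Y) + card (?N Y) = card (?N X \<union> ?N Y)"
    by (metis Un_Diff_cancel2 card_Un_disjoint Diff_disjoint Int_commute fNX fNY finite_Diff add.commute)
  have cD2: "card (?N X - ?N Y) \<le> card X - card (X\<inter>Y)"
    using cD bU' leU bY cY cxy by linarith
  have ext: "exterior V E Y = V - ?N Y"
    unfolding exterior_def using sub_nbhd[OF r YV(1)] by auto
  have admU: "k_admissible V E k (X\<union>Y)"
  proof -
    have "card_ge (V - ?N (X\<union>Y)) k"
    proof (cases "finite (V - ?N Y)")
      case False
      have "V - ?N Y \<subseteq> (V - ?N (X\<union>Y)) \<union> (?N X - ?N Y)" using NU by auto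
      hence "infinite (V - ?N (X\<union>Y))" using False fNX
        by (meson finite_Diff finite_UnI finite_subset)
      thus ?thesis unfolding card_ge_def by simp
    next
      case True
      have ge: "card X - card (X \<inter> Y) + k \<le> card (V - ?N Y)"
        using assms(8) True unfolding ext card_ge_def by simp
      have eq: "V - ?N (X\<union>Y) = (V - ?N Y) - (?N X - ?N Y)" using NU by auto
      have "card ((V - ?N Y) - (?N X - ?N Y)) \<ge> card (V - ?N Y) - card (?N X - ?N Y)"
        by (rule diff_card_le_card_Diff) (use fNX in auto)
      thus ?thesis unfolding card_ge_def eq using ge cD2 by linarith
    qed
    moreover have "k \<le> card (X\<union>Y)"
      using XV(3) card_mono[of "X\<union>Y" X] XV(2) YV(2) by auto
    ultimately show ?thesis unfolding k_admissible_def using XV YV by auto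
  qed
  have kU: "?K \<le> card (boundary E (X\<union>Y))" using kappa_le[OF admU] .
  have eqU: "card (boundary E (X\<union>Y)) = ?K" using kU leU by simp
  have eqI: "card (boundary E (X\<inter>Y)) = ?K"
    using bU' cIU cNI cxy bI kI bX bY cX cY eqU by linarith
  show ?thesis unfolding k_fragment_def using admI admU eqI eqU by auto
qed

end
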